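(* Let $n_*>2$ be an integer, $\phi:(n_*,+\infty)\to(1,+\infty)$ strictly increasing, and $\mathsf{G}\in\mathbb{G}(n_*,\phi)$. Then for every $x\in\mathsf{V}$ there exists $N_x\in\mathbb{N}$ such that, for all $N\ge N_x$, every $y\in\mathsf{B}(N,x)=\{y:\rho(x,y)\le N\}$ satisfies $n(y)\le n_*$ or $\phi(n(y))\le 2N$ (i.e. $\max_{y\in\mathsf{B}(N,x)}n(y)\le\phi^{-1}(2N)$).
   Context: $\mathsf{G}=(\mathsf{V},\mathsf{E})$ is a countable, connected, locally finite undirected graph; $n(x)$ is the degree, $\rho$ the path distance. For integer $n_*>2$, $\mathsf{V}_*=\{x:n(x)\le n_*\}$, $\mathsf{V}_*^c=\mathsf{V}\setminus\mathsf{V}_*$. For strictly increasing $\phi:(n_*,+\infty)\to(0,+\infty)$, $\mathbb{G}(n_*,\phi)$ is the family of graphs with $\rho(x,y)\ge\phi[\max\{n(x),n(y)\}]$ for all $x,y\in\mathsf{V}_*^c$. *)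

theory Defs
  imports Complex_Main "HOL-Library.Countable_Set"
begin

definition ugraph :: "'a set \<Rightarrow> ('a \<Rightarrow> 'a \<Rightarrow> bool) \<Rightarrow> bool" where
  "ugraph V E \<longleftrightarrow> (\<forall>x y. E x y \<longrightarrow> x \<in> V \<and> y \<in> V \<and> E y x \<and> x \<noteq> y)"

definition edge_rel :: "'a set \<Rightarrow> ('a \<Rightarrow> 'a \<Rightarrow> bool) \<Rightarrow> ('a \<times> 'a) set" where
  "edge_rel V E = {(x, y). x \<in> V \<and> y \<in> V \<and> E x y}"

definition degree :: "'a set \<Rightarrow> ('a \<Rightarrow> 'a \<Rightarrow> bool) \<Rightarrow> 'a \<Rightarrow> nat" where
  "degree V E x = card {y \<in> V. E x y}"

definition locally_finite :: "'a set \<Rightarrow> ('a \<Rightarrow> 'a \<Rightarrow> bool) \<Rightarrow> bool" where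
  "locally_finite V E \<longleftrightarrow> (\<forall>x\<in>V. finite {y \<in> V. E x y})"

definition connected_graph :: "'a set \<Rightarrow> ('a \<Rightarrow> 'a \<Rightarrow> bool) \<Rightarrow> bool" where
  "connected_graph V E \<longleftrightarrow> (\<forall>x\<in>V. \<forall>y\<in>V. (x, y) \<in> (edge_rel V E)\<^sup>*)"

definition path_dist :: "'a set \<Rightarrow> ('a \<Rightarrow> 'a \<Rightarrow> bool) \<Rightarrow> 'a \<Rightarrow> 'a \<Rightarrow> nat" where
  "path_dist V E x y = (LEAST k. (x, y) \<in> (edge_rel V E) ^^ k)"

definition in_class_G :: "'a set \<Rightarrow> ('a \<Rightarrow> 'a \<Rightarrow> bool) \<Rightarrow> nat \<Rightarrow> (real \<Rightarrow> real) \<Rightarrow> bool" where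
  "in_class_G V E nstar \<phi> \<longleftrightarrow>
     (\<forall>x\<in>V. \<forall>y\<in>V. x \<noteq> y \<longrightarrow> degree V E x > nstar \<longrightarrow> degree V E y > nstar \<longrightarrow>
        real (path_dist V E x y) \<ge> \<phi> (real (max (degree V E x) (degree V E y))))"

end

theory Submission
  imports Defs
begin

lemma relpow_sym_aux:
  assumes sym: "\<And>a b. (a,b) \<in> R \<Longrightarrow> (b,a) \<in> R"
  shows "(x,y) \<in> R ^^ k \<Longrightarrow> (y,x) \<in> R ^^ k"
proof (induction k arbitrary: x y)
  case 0 then show ?case by simp
next
  case (Suc k)
  then obtain z where "(x,z) \<in> R ^^ k" "(z,y) \<in> R" by auto
  then have "(z,x) \<in> R ^^ k" "(y,z) \<in> R" using Suc.IH sym by auto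
  then show ?case using relpow_Suc_I2 by metis
qed

lemma pd_facts:
  assumes graph: "ugraph V E" and conn: "connected_graph V E"
    and xV: "x \<in> V" and yV: "y \<in> V" and zV: "z \<in> V"
  shows "path_dist V E x y = path_dist V E y x"
    and "path_dist V E x z \<le> path_dist V E x y + path_dist V E y z"
proof -
  let ?R = "edge_rel V E"
  have sym: "\<And>a b. (a,b) \<in> ?R \<Longrightarrow> (b,a) \<in> ?R"
    using graph unfolding ugraph_def edge_rel_def by auto
  have ex: "\<And>a b. a \<in> V \<Longrightarrow> b \<in> V \<Longrightarrow> \<exists>k. (a,b) \<in> ?R ^^ k"
    using conn unfolding connected_graph_def by (meson rtrancl_imp_relpow)
  have L: "\<And>a b. a \<in> V \<Longrightarrow> b \<in> V \<Longrightarrow> (a,b) \<in> ?R ^^ path_dist V E a b"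
    unfolding path_dist_def using ex by (meson LeastI_ex)
  have le: "\<And>a b k. (a,b) \<in> ?R ^^ k \<Longrightarrow> path_dist V E a b \<le> k"
    unfolding path_dist_def by (simp add: Least_le)
  have "path_dist V E y x \<le> path_dist V E x y"
    using le relpow_sym_aux[OF sym L[OF xV yV]] by blast
  moreover have "path_dist V E x y \<le> path_dist V E y x"
    using le relpow_sym_aux[OF sym L[OF yV xV]] by blast
  ultimately show "path_dist V E x y = path_dist V E y x" by simp
  have "(x,z) \<in> ?R ^^ (path_dist V E x y + path_dist V E y z)"
    using L[OF xV yV] L[OF yV zV] relpow_add by blast
  then show "path_dist V E x z \<le> path_dist V E x y + path_dist V E y z" using le by blast
qed

theorem lemma5p6:
  fixes V :: "'a set" and E :: "'a \<Rightarrow> 'a \<Rightarrow> bool"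
    and nstar :: nat and \<phi> :: "real \<Rightarrow> real"
  assumes graph: "ugraph V E" and ctbl: "countable V" and conn: "connected_graph V E"
    and lf: "locally_finite V E"
    and nstar: "nstar > 2"
    and mono: "strict_mono_on {real nstar<..} \<phi>"
    and range: "\<forall>t > real nstar. \<phi> t > 1"
    and G: "in_class_G V E nstar \<phi>"
  shows "\<forall>x\<in>V. \<exists>Nx::nat. \<forall>N\<ge>Nx. \<forall>y\<in>V. path_dist V E x y \<le> N \<longrightarrow>
           degree V E y \<le> nstar \<or> \<phi> (real (degree V E y)) \<le> 2 * real N"
proof
  fix x assume xV: "x \<in> V"
  let ?H = "{v \<in> V. degree V E v > nstar}"
  have monoH: "\<phi> (real (degree V E y)) \<le> \<phi> (real (max (degree V E y) (degree V E z)))"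
    if "y \<in> ?H" "z \<in> ?H" for y z
  proof (cases "degree V E y \<le> degree V E z")
    case True
    then have "max (degree V E y) (degree V E z) = degree V E z" by simp
    moreover have "\<phi> (real (degree V E y)) \<le> \<phi> (real (degree V E z))"
    proof (cases "degree V E y = degree V E z")
      case False
      with True have "real (degree V E y) < real (degree V E z)" by simp
      then show ?thesis using mono that unfolding strict_mono_on_def
        by (smt (verit, best) greaterThan_iff mem_Collect_eq of_nat_less_iff)
    qed simp
    ultimately show ?thesis by simp
  qed simp
  show "\<exists>Nx::nat. \<forall>N\<ge>Nx. \<forall>y\<in>V. path_dist V E x y \<le> N \<longrightarrow>
           degree V E y \<le> nstar \<or> \<phi> (real (degree V E y)) \<le> 2 * real N"
  proof (cases "\<exists>y1 y2. y1 \<in> ?H \<and> y2 \<in> ?H \<and> y1 \<noteq> y2")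
    case True
    then obtain y1 y2 where y: "y1 \<in> ?H" "y2 \<in> ?H" "y1 \<noteq> y2" by blast
    show ?thesis
    proof (intro exI[of _ "max (path_dist V E x y1) (path_dist V E x y2)"] allI impI ballI)
      fix N y assume N: "max (path_dist V E x y1) (path_dist V E x y2) \<le> N"
        and yV: "y \<in> V" and dy: "path_dist V E x y \<le> N"
      show "degree V E y \<le> nstar \<or> \<phi> (real (degree V E y)) \<le> 2 * real N"
      proof (cases "degree V E y \<le> nstar")
        case True then show ?thesis by simp
      next
        case False
        then have yH: "y \<in> ?H" using yV by simp
        obtain w where w: "w \<in> ?H" "w \<noteq> y" "path_dist V E x w \<le> N"
          using y N by (metis max.bounded_iff)
        have "path_dist V E y w \<le> path_dist V E y x + path_dist V E x w"
          using pd_facts(2)[OF graph conn yV xV] w by simp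
        also have "path_dist V E y x = path_dist V E x y"
          using pd_facts(1)[OF graph conn yV xV xV] by simp
        finally have "path_dist V E y w \<le> 2 * N" using dy w by linarith
        moreover have "real (path_dist V E y w) \<ge> \<phi> (real (max (degree V E y) (degree V E w)))"
          using G yH w(1,2) yV unfolding in_class_G_def by simp
        moreover have "real (path_dist V E y w) \<le> 2 * real N"
          using calculation(1) by (metis of_nat_le_iff of_nat_mult of_nat_numeral)
        ultimately have "\<phi> (real (degree V E y)) \<le> 2 * real N"
          using monoH[OF yH w(1)] by linarith
        then show ?thesis by simp
      qed
    qed
  next
    case False
    show ?thesis
    proof (cases "?H = {}")
      case True
      have all: "degree V E y \<le> nstar" if yV: "y \<in> V" for y
      proof -
        have "y \<notin> ?H" using True by blast
        then show ?thesis using yV by simp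
      qed
      show ?thesis using all by blast
    next
      case ne: False
      then obtain z where z: "z \<in> ?H" by blast
      have Hz: "y = z" if "y \<in> ?H" for y
        using False z that by blast
      show ?thesis
      proof (intro exI[of _ "nat \<lceil>\<phi> (real (degree V E z)) / 2\<rceil>"] allI impI ballI)
        fix N y assume N: "nat \<lceil>\<phi> (real (degree V E z)) / 2\<rceil> \<le> N" and yV: "y \<in> V"
        have c1: "\<lceil>\<phi> (real (degree V E z)) / 2\<rceil> \<le> int N" using N by (simp add: nat_le_iff)
        have c2: "\<phi> (real (degree V E z)) / 2 \<le> real_of_int \<lceil>\<phi> (real (degree V E z)) / 2\<rceil>"
          by (rule le_of_int_ceiling)
        have c3: "real_of_int \<lceil>\<phi> (real (degree V E z)) / 2\<rceil> \<le> real N"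
          using c1 by (metis of_int_le_iff of_int_of_nat_eq)
        show "degree V E y \<le> nstar \<or> \<phi> (real (degree V E y)) \<le> 2 * real N"
        proof (cases "degree V E y \<le> nstar")
          case False
          then have "y = z" using Hz yV by simp
          have "\<phi> (real (degree V E z)) \<le> 2 * real N" using c2 c3 by linarith
          then show ?thesis using \<open>y = z\<close> by simp
        qed simp
      qed
    qed
  qed
qed

end
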